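(* Let $\mathsf H$ be a Hilbert space. Every $2\times2$ submagic matrix with entries projections on $\mathsf H$ can be completed to a $4\times4$ magic matrix of projections on $\mathsf H$ (i.e. one whose upper-left $2\times2$ block is the given matrix). However, there exist $2\times2$ submagic matrices that cannot be completed to a $3\times3$ magic matrix.
   Context: A submagic matrix is a square matrix whose entries are orthogonal projections, pairwise orthogonal within each row and within each column; it is magic if in addition the entries of each row and each column sum to $1$. *)

theory Defs
  imports "HOL-Analysis.Analysis"
begin

text \<open>A complex Hilbert space is modelled as a real Hilbert space (type class
  real_inner + complete_space) equipped with an orthogonal complex structure J
  (multiplication by the imaginary unit). The complex inner product is recovered as
  inner x y + i * inner x (J y) (up to convention), and complex-linear maps are exactly
  the real-linear maps commuting with J.\<close>

definition complex_structure :: "('a::real_inner \<Rightarrow> 'a) \<Rightarrow> bool" where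
  "complex_structure J \<longleftrightarrow> linear J \<and> (\<forall>x. J (J x) = - x) \<and>
     (\<forall>x y. inner (J x) (J y) = inner x y)"

definition is_proj :: "('a::real_inner \<Rightarrow> 'a) \<Rightarrow> ('a \<Rightarrow> 'a) \<Rightarrow> bool" where
  "is_proj J P \<longleftrightarrow> bounded_linear P \<and> (\<forall>x. P (J x) = J (P x)) \<and>
     (\<forall>x. P (P x) = P x) \<and> (\<forall>x y. inner (P x) y = inner x (P y))"

definition orth_op :: "('a::real_inner \<Rightarrow> 'a) \<Rightarrow> ('a \<Rightarrow> 'a) \<Rightarrow> bool" where
  "orth_op P Q \<longleftrightarrow> (\<forall>x. P (Q x) = 0)"

definition submagic :: "('a::real_inner \<Rightarrow> 'a) \<Rightarrow> nat \<Rightarrow> (nat \<Rightarrow> nat \<Rightarrow> 'a \<Rightarrow> 'a) \<Rightarrow> bool" where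
  "submagic J n M \<longleftrightarrow>
     (\<forall>i<n. \<forall>j<n. is_proj J (M i j)) \<and>
     (\<forall>i<n. \<forall>j<n. \<forall>k<n. j \<noteq> k \<longrightarrow> orth_op (M i j) (M i k)) \<and>
     (\<forall>j<n. \<forall>i<n. \<forall>k<n. i \<noteq> k \<longrightarrow> orth_op (M i j) (M k j))"

definition magic :: "('a::real_inner \<Rightarrow> 'a) \<Rightarrow> nat \<Rightarrow> (nat \<Rightarrow> nat \<Rightarrow> 'a \<Rightarrow> 'a) \<Rightarrow> bool" where
  "magic J n M \<longleftrightarrow> submagic J n M \<and>
     (\<forall>i<n. \<forall>x. (\<Sum>j<n. M i j x) = x) \<and>
     (\<forall>j<n. \<forall>x. (\<Sum>i<n. M i j x) = x)"

definition J2 :: "complex ^ 2 \<Rightarrow> complex ^ 2" where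
  "J2 x = (\<chi> i. \<i> * x $ i)"

end

theory Submission
  imports Defs
begin

definition CC :: "('a::real_inner \<Rightarrow> 'a) \<Rightarrow> ('a \<Rightarrow> 'a) \<Rightarrow> 'a \<Rightarrow> 'a" where
  "CC P Q = (\<lambda>x. x - P x - Q x)"

lemma is_proj_0: "complex_structure J \<Longrightarrow> is_proj J (\<lambda>x. 0)"
  unfolding is_proj_def complex_structure_def by (auto simp: linear_0)

lemma orth_0: "orth_op (\<lambda>x. 0) P" "is_proj J P \<Longrightarrow> orth_op P (\<lambda>x. (0::'a::real_inner))"
  unfolding orth_op_def is_proj_def by (auto simp: linear_simps)

lemma is_proj_CC:
  assumes J: "complex_structure J" and P: "is_proj J P" and Q: "is_proj J Q"
    and pq: "orth_op P Q" and qp: "orth_op Q P"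
  shows "is_proj J (CC P Q)"
proof -
  interpret P: bounded_linear P using P by (simp add: is_proj_def)
  interpret Q: bounded_linear Q using Q by (simp add: is_proj_def)
  have lJ: "linear J" using J by (simp add: complex_structure_def)
  have PP: "\<And>x. P (P x) = P x" "\<And>x. Q (Q x) = Q x" using P Q by (auto simp: is_proj_def)
  have PJ: "\<And>x. P (J x) = J (P x)" "\<And>x. Q (J x) = J (Q x)" using P Q by (auto simp: is_proj_def)
  have sa: "\<And>x y. inner (P x) y = inner x (P y)" "\<And>x y. inner (Q x) y = inner x (Q y)"
    using P Q by (auto simp: is_proj_def)
  have o: "\<And>x. P (Q x) = 0" "\<And>x. Q (P x) = 0" using pq qp by (auto simp: orth_op_def)
  show ?thesis unfolding is_proj_def CC_def
  proof (intro conjI allI)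
    show "bounded_linear (\<lambda>x. x - P x - Q x)"
      by (intro bounded_linear_sub bounded_linear_ident P.bounded_linear_axioms Q.bounded_linear_axioms)
    fix x
    show "J x - P (J x) - Q (J x) = J (x - P x - Q x)"
      using lJ by (simp add: PJ linear_diff)
    show "x - P x - Q x - P (x - P x - Q x) - Q (x - P x - Q x) = x - P x - Q x"
      by (simp add: P.diff Q.diff PP o)
  next
    fix x y
    show "inner (x - P x - Q x) y = inner x (y - P y - Q y)"
      by (simp add: inner_diff_left inner_diff_right sa)
  qed
qed

lemma orth_CC:
  assumes P: "is_proj J P" and Q: "is_proj J Q"
    and pq: "orth_op P Q" and qp: "orth_op Q P"
  shows "orth_op P (CC P Q)" "orth_op (CC P Q) P" "orth_op Q (CC P Q)" "orth_op (CC P Q) Q"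
proof -
  interpret P: bounded_linear P using P by (simp add: is_proj_def)
  interpret Q: bounded_linear Q using Q by (simp add: is_proj_def)
  have PP: "\<And>x. P (P x) = P x" "\<And>x. Q (Q x) = Q x" using P Q by (auto simp: is_proj_def)
  have o: "\<And>x. P (Q x) = 0" "\<And>x. Q (P x) = 0" using pq qp by (auto simp: orth_op_def)
  show "orth_op P (CC P Q)" "orth_op (CC P Q) P" "orth_op Q (CC P Q)" "orth_op (CC P Q) Q"
    unfolding orth_op_def CC_def by (auto simp: P.diff Q.diff PP o)
qed

lemma part1:
  fixes J :: "'a::real_inner \<Rightarrow> 'a"
  assumes J: "complex_structure J" and M: "submagic J 2 M"
  shows "\<exists>N. magic J 4 N \<and> (\<forall>i<2. \<forall>j<2. N i j = M i j)"
proof -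
  define a where "a = M 0 0"
  define b where "b = M 0 1"
  define c where "c = M 1 0"
  define d where "d = M 1 1"
  have pa: "is_proj J a" "is_proj J b" "is_proj J c" "is_proj J d"
    using M unfolding submagic_def a_def b_def c_def d_def by auto
  have oab: "orth_op a b" "orth_op b a" "orth_op c d" "orth_op d c"
     "orth_op a c" "orth_op c a" "orth_op b d" "orth_op d b"
    using M unfolding submagic_def a_def b_def c_def d_def
    by (auto dest!: spec[where x=0] spec[where x=1])
  note o1 = orth_CC[OF pa(1) pa(2) oab(1) oab(2)]
  note o2 = orth_CC[OF pa(3) pa(4) oab(3) oab(4)]
  note o3 = orth_CC[OF pa(1) pa(3) oab(5) oab(6)]
  note o4 = orth_CC[OF pa(2) pa(4) oab(7) oab(8)]
  note p1 = is_proj_CC[OF J pa(1) pa(2) oab(1) oab(2)]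
  note p2 = is_proj_CC[OF J pa(3) pa(4) oab(3) oab(4)]
  note p3 = is_proj_CC[OF J pa(1) pa(3) oab(5) oab(6)]
  note p4 = is_proj_CC[OF J pa(2) pa(4) oab(7) oab(8)]
  define z where "z = (\<lambda>x::'a. 0::'a)"
  define N where "N = (\<lambda>i j. [[a, b, CC a b, z], [c, d, z, CC c d],
                               [CC a c, z, a, c], [z, CC b d, b, d]] ! i ! j)"
  have four: "\<And>i::nat. i < 4 \<longleftrightarrow> i = 0 \<or> i = 1 \<or> i = 2 \<or> i = 3" by auto
  have pz: "is_proj J z" unfolding z_def by (rule is_proj_0[OF J])
  have oz: "\<And>P. orth_op z P" "\<And>P. is_proj J P \<Longrightarrow> orth_op P z" unfolding z_def by (auto simp: orth_0)
  have "submagic J 4 N"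
    unfolding submagic_def four N_def
    by (auto simp: pa pz p1 p2 p3 p4 oz o1 o2 o3 o4 oab)
  moreover have "\<forall>i<4. \<forall>x. (\<Sum>j<4. N i j x) = x" "\<forall>j<4. \<forall>x. (\<Sum>i<4. N i j x) = x"
    unfolding four N_def
    by (auto simp: eval_nat_numeral CC_def z_def algebra_simps)
  moreover have "\<forall>i<2. \<forall>j<2. N i j = M i j"
    by (auto simp: N_def a_def b_def c_def d_def less_2_cases_iff)
  ultimately show ?thesis unfolding magic_def by blast
qed

lemma part2: "\<exists>M. submagic J2 2 M \<and>
            \<not> (\<exists>N. magic J2 3 N \<and> (\<forall>i<2. \<forall>j<2. N i j = M i j))"
proof (intro exI conjI notI)
  show "submagic J2 2 (\<lambda>i j x. 0)"
    unfolding submagic_def is_proj_def orth_op_def J2_def by (auto simp: vec_eq_iff)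
next
  assume "\<exists>N. magic J2 3 N \<and> (\<forall>i<2. \<forall>j<2. N i j = (\<lambda>x. 0))"
  then obtain N where N: "magic J2 3 N" and Z: "\<forall>i<2. \<forall>j<2. N i j = (\<lambda>x. 0)" by blast
  have r: "\<And>x. (\<Sum>j<3. N 0 j x) = x" "\<And>x. (\<Sum>j<3. N 1 j x) = x"
    using N unfolding magic_def by auto
  have o: "orth_op (N 0 2) (N 1 2)" using N unfolding magic_def submagic_def by auto
  have z: "N 0 0 = (\<lambda>x. 0)" "N 0 1 = (\<lambda>x. 0)" "N 1 0 = (\<lambda>x. 0)" "N 1 1 = (\<lambda>x. 0)"
    using Z by auto
  have e: "\<And>x. N 0 2 x = x" "\<And>x. N 1 2 x = x"
    using r[unfolded eval_nat_numeral] z[unfolded eval_nat_numeral One_nat_def] by (simp_all add: eval_nat_numeral)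
  have "\<And>x::complex^2. x = 0" using o e by (auto simp: orth_op_def)
  then have "(1::complex^2) = 0" by blast
  then show False by (simp add: vec_eq_iff)
qed

theorem proposition3p5:
  shows "(\<forall>(J :: 'a::{real_inner, complete_space} \<Rightarrow> 'a) M.
            complex_structure J \<and> submagic J 2 M \<longrightarrow>
            (\<exists>N. magic J 4 N \<and> (\<forall>i<2. \<forall>j<2. N i j = M i j)))
       \<and> (\<exists>M. submagic J2 2 M \<and>
            \<not> (\<exists>N. magic J2 3 N \<and> (\<forall>i<2. \<forall>j<2. N i j = M i j)))"
  using part1 part2 by blast

end
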